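(* Let $G$ be a labeled complete graph (every edge labeled $+$ or $-$), let $\alpha,\gamma$ be real parameters with $0<\gamma<\alpha<1/2$, and let $x$ be any fractional clustering of $G$. Let $\mathcal{C}$ be the clustering produced by the following algorithm (Algorithm 1), where ties in the choice of pivot are broken arbitrarily: Set $S=V(G)$. While $S\neq\emptyset$: for each $u\in S$ let $T_u=\{w\in S\setminus\{u\} : x_{uw}\le\alpha\}$ and $T^*_u=\{w\in S\setminus\{u\} : x_{uw}\le\gamma\}$; choose a pivot $u\in S$ maximizing $|T^*_u|$ and let $T=T_u$; if $\sum_{w\in T}x_{uw}\ge \alpha|T|/2$, output the cluster $\{u\}$ and set $S=S\setminus\{u\}$; otherwise output the cluster $\{u\}\cup T$ and set $S=S\setminus(\{u\}\cup T)$. Then there is a constant $c$ depending only on $\alpha$ and $\gamma$ such that $\mathrm{err}(\mathcal{C})_v\le c\,\mathrm{err}(x)_v$ for all $v\in V(G)$.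
   Context: A (discrete) clustering of $G$ is a partition of $V(G)$. A fractional clustering of $G$ is a vector $x$ indexed by the unordered pairs of distinct vertices of $G$ with $x_{uv}\in[0,1]$ for all pairs and $x_{vz}\le x_{vw}+x_{wz}$ for all distinct $v,w,z$; by convention $x_{uu}=0$. For vertex $v$, $N^+(v)$ and $N^-(v)$ denote the sets of vertices joined to $v$ by a $+$ edge, resp. a $-$ edge. The error vector of a fractional clustering $x$ is the vector indexed by $V(G)$ with $\mathrm{err}(x)_v=\sum_{w\in N^+(v)}x_{vw}+\sum_{w\in N^-(v)}(1-x_{vw})$. For a clustering $\mathcal{C}$, $x^{\mathcal{C}}$ is the fractional clustering with $x^{\mathcal{C}}_{uv}=0$ if $u,v$ lie in the same cluster and $1$ otherwise, and $\mathrm{err}(\mathcal{C})=\mathrm{err}(x^{\mathcal{C}})$ (so $\mathrm{err}(\mathcal{C})_v$ is the number of $+$ edges at $v$ going between clusters plus the number of $-$ edges at $v$ inside $v$'s cluster). *)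

theory Defs
  imports Complex_Main
begin

definition labeled_complete_graph :: "'a set \<Rightarrow> ('a \<Rightarrow> 'a \<Rightarrow> bool) \<Rightarrow> bool" where
  "labeled_complete_graph V pos \<longleftrightarrow> finite V \<and> (\<forall>u\<in>V. \<forall>w\<in>V. pos u w = pos w u)"

definition fractional_clustering :: "'a set \<Rightarrow> ('a \<Rightarrow> 'a \<Rightarrow> real) \<Rightarrow> bool" where
  "fractional_clustering V x \<longleftrightarrow>
     (\<forall>u\<in>V. x u u = 0) \<and>
     (\<forall>u\<in>V. \<forall>w\<in>V. x u w = x w u) \<and>
     (\<forall>u\<in>V. \<forall>w\<in>V. u \<noteq> w \<longrightarrow> 0 \<le> x u w \<and> x u w \<le> 1) \<and>
     (\<forall>v\<in>V. \<forall>w\<in>V. \<forall>z\<in>V. v \<noteq> w \<and> w \<noteq> z \<and> v \<noteq> z \<longrightarrow> x v z \<le> x v w + x w z)"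

definition err :: "'a set \<Rightarrow> ('a \<Rightarrow> 'a \<Rightarrow> bool) \<Rightarrow> ('a \<Rightarrow> 'a \<Rightarrow> real) \<Rightarrow> 'a \<Rightarrow> real" where
  "err V pos x v = (\<Sum>w\<in>{w\<in>V. w \<noteq> v \<and> pos v w}. x v w) + (\<Sum>w\<in>{w\<in>V. w \<noteq> v \<and> \<not> pos v w}. 1 - x v w)"

definition clustering_vec :: "'a set set \<Rightarrow> 'a \<Rightarrow> 'a \<Rightarrow> real" where
  "clustering_vec C u v = (if u = v \<or> (\<exists>A\<in>C. u \<in> A \<and> v \<in> A) then 0 else 1)"

definition err_clustering :: "'a set \<Rightarrow> ('a \<Rightarrow> 'a \<Rightarrow> bool) \<Rightarrow> 'a set set \<Rightarrow> 'a \<Rightarrow> real" where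
  "err_clustering V pos C v = err V pos (clustering_vec C) v"

definition Tset :: "real \<Rightarrow> ('a \<Rightarrow> 'a \<Rightarrow> real) \<Rightarrow> 'a set \<Rightarrow> 'a \<Rightarrow> 'a set" where
  "Tset t x S u = {w \<in> S - {u}. x u w \<le> t}"

text \<open>Algorithm 1, with arbitrary tie breaking: alg1 alpha gamma x S Cs holds iff
the list of clusters Cs is a possible output of the algorithm started on S.\<close>

inductive alg1 :: "real \<Rightarrow> real \<Rightarrow> ('a \<Rightarrow> 'a \<Rightarrow> real) \<Rightarrow> 'a set \<Rightarrow> 'a set list \<Rightarrow> bool"
  for \<alpha> \<gamma> x where
  stop: "alg1 \<alpha> \<gamma> x {} []"
| single: "\<lbrakk> u \<in> S; \<forall>u'\<in>S. card (Tset \<gamma> x S u') \<le> card (Tset \<gamma> x S u);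
             (\<Sum>w\<in>Tset \<alpha> x S u. x u w) \<ge> \<alpha> * real (card (Tset \<alpha> x S u)) / 2;
             alg1 \<alpha> \<gamma> x (S - {u}) Cs \<rbrakk>
           \<Longrightarrow> alg1 \<alpha> \<gamma> x S ({u} # Cs)"
| cluster: "\<lbrakk> u \<in> S; \<forall>u'\<in>S. card (Tset \<gamma> x S u') \<le> card (Tset \<gamma> x S u);
             (\<Sum>w\<in>Tset \<alpha> x S u. x u w) < \<alpha> * real (card (Tset \<alpha> x S u)) / 2;
             alg1 \<alpha> \<gamma> x (S - insert u (Tset \<alpha> x S u)) Cs \<rbrakk>
           \<Longrightarrow> alg1 \<alpha> \<gamma> x S (insert u (Tset \<alpha> x S u) # Cs)"

end

theory Submission
  imports Defs
begin

definition dlt :: "real \<Rightarrow> real \<Rightarrow> real" where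
  "dlt a g = min g (min ((a-g)/2) ((1-2*a)/2))"

lemma alg1_sub: "alg1 a g x S Cs \<Longrightarrow> A \<in> set Cs \<Longrightarrow> A \<subseteq> S"
  by (induction rule: alg1.induct) (auto simp: Tset_def)

lemma err_eq:
  assumes "finite S"
  shows "err S pos f v = (\<Sum>w\<in>S-{v}. if pos v w then f v w else 1 - f v w)"
proof -
  have "(\<Sum>w\<in>S-{v}. if pos v w then f v w else 1 - f v w) = (\<Sum>w\<in>(S-{v}) \<inter> {w. pos v w}. f v w) + (\<Sum>w\<in>(S-{v}) \<inter> - {w. pos v w}. 1 - f v w)"
    using assms by (simp add: sum.If_cases)
  also have "(S-{v}) \<inter> {w. pos v w} = {w\<in>S. w \<noteq> v \<and> pos v w}" by auto
  also have "(S-{v}) \<inter> - {w. pos v w} = {w\<in>S. w \<noteq> v \<and> \<not> pos v w}" by auto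
  finally show ?thesis unfolding err_def by simp
qed

locale cc =
  fixes \<alpha> \<gamma> :: real and V :: "'a set" and pos :: "'a \<Rightarrow> 'a \<Rightarrow> bool"
    and x :: "'a \<Rightarrow> 'a \<Rightarrow> real" and v :: 'a
  assumes g0: "0 < \<gamma>" and ga: "\<gamma> < \<alpha>" and ah: "\<alpha> < 1/2"
    and fin: "finite V" and fc: "fractional_clustering V x" and vV: "v \<in> V"
begin

abbreviation "\<delta> \<equiv> dlt \<alpha> \<gamma>"

lemma dpos: "0 < \<delta>" and dg: "\<delta> \<le> \<gamma>" and dag: "2*\<delta> \<le> \<alpha> - \<gamma>" and da: "2*\<delta> \<le> 1 - 2*\<alpha>"
  using g0 ga ah by (auto simp: dlt_def min_def)

lemma a0: "0 < \<alpha>" using g0 ga by simp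

lemma xsym: "a \<in> V \<Longrightarrow> b \<in> V \<Longrightarrow> x a b = x b a"
  using fc by (auto simp: fractional_clustering_def)
lemma xge0: "a \<in> V \<Longrightarrow> b \<in> V \<Longrightarrow> 0 \<le> x a b"
  using fc by (cases "a=b") (auto simp: fractional_clustering_def)
lemma xle1: "a \<in> V \<Longrightarrow> b \<in> V \<Longrightarrow> x a b \<le> 1"
  using fc by (cases "a=b") (auto simp: fractional_clustering_def)
lemma xrefl: "a \<in> V \<Longrightarrow> x a a = 0"
  using fc by (auto simp: fractional_clustering_def)
lemma tri: "a \<in> V \<Longrightarrow> b \<in> V \<Longrightarrow> c \<in> V \<Longrightarrow> a \<noteq> b \<Longrightarrow> b \<noteq> c \<Longrightarrow> a \<noteq> c \<Longrightarrow> x a c \<le> x a b + x b c"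
  using fc unfolding fractional_clustering_def by blast

definition cost where "cost w = (if pos v w then x v w else 1 - x v w)"
definition yS where "yS S = (\<Sum>w\<in>S-{v}. cost w)"

lemma cost_ge0: "w \<in> V \<Longrightarrow> 0 \<le> cost w"
  using xge0[OF vV] xle1[OF vV] by (simp add: cost_def)

lemma card_le_sum:
  assumes "finite A" "A \<subseteq> V" "\<And>w. w\<in>A \<Longrightarrow> t \<le> cost w" "0 < t"
  shows "real (card A) \<le> (\<Sum>w\<in>A. cost w) / t"
proof -
  have "real (card A) * t \<le> (\<Sum>w\<in>A. cost w)" using sum_bounded_below[of A t cost] assms(3) by simp
  thus ?thesis using assms(4) by (simp add: field_simps)
qed

lemma sum_sub:
  assumes "A \<subseteq> S - {v}" "S \<subseteq> V"
  shows "(\<Sum>w\<in>A. cost w) \<le> yS S"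
  unfolding yS_def
  apply (rule sum_mono2)
  using assms fin finite_subset cost_ge0 by auto


lemma lemA:
  assumes SV: "S \<subseteq> V" and vS: "v \<in> S"
    and sing: "(\<Sum>w\<in>Tset \<alpha> x S v. x v w) \<ge> \<alpha> * real (card (Tset \<alpha> x S v)) / 2"
  shows "real (card {w\<in>S-{v}. pos v w}) \<le> (2/\<alpha>) * yS S"
proof -
  let ?T = "Tset \<alpha> x S v"
  let ?P = "{w\<in>S-{v}. pos v w}"
  have finS: "finite S" using SV fin finite_subset by blast
  have TS: "?T \<subseteq> S - {v}" by (auto simp: Tset_def)
  have finT: "finite ?T" using TS finS finite_subset by blast
  have "?P = (?P \<inter> ?T) \<union> (?P - ?T)" by auto
  hence "card ?P = card (?P \<inter> ?T) + card (?P - ?T)"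
    using finS by (metis (no_types, lifting) Diff_disjoint Int_Diff_disjoint card_Un_disjoint finite_Diff finite_Int inf_commute  finite_subset Diff_subset mem_Collect_eq subsetI)
  moreover have "card (?P \<inter> ?T) \<le> card ?T" using finT by (simp add: card_mono)
  ultimately have c1: "real (card ?P) \<le> real (card ?T) + real (card (?P - ?T))" by simp
  have "(\<Sum>w\<in>?T. x v w) \<le> (\<Sum>w\<in>?T. cost w)"
  proof (rule sum_mono)
    fix w assume "w \<in> ?T"
    hence "x v w \<le> \<alpha>" by (auto simp: Tset_def)
    thus "x v w \<le> cost w" using ah by (auto simp: cost_def)
  qed
  hence c2: "real (card ?T) \<le> (2/\<alpha>) * (\<Sum>w\<in>?T. cost w)"
    using sing a0 by (simp add: field_simps)
  have c3: "real (card (?P - ?T)) \<le> (\<Sum>w\<in>?P - ?T. cost w) / \<alpha>"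
    apply (rule card_le_sum)
    using finS SV a0 by (auto simp: Tset_def cost_def)
  have "(\<Sum>w\<in>?T. cost w) + (\<Sum>w\<in>?P - ?T. cost w) = (\<Sum>w\<in>?T \<union> (?P - ?T). cost w)"
    by (rule sum.union_disjoint[symmetric]) (use finT finS in auto)
  also have "\<dots> \<le> yS S" by (rule sum_sub) (use TS SV in auto)
  finally have c4: "(\<Sum>w\<in>?T. cost w) + (\<Sum>w\<in>?P - ?T. cost w) \<le> yS S" .
  have nn: "0 \<le> (\<Sum>w\<in>?P - ?T. cost w)" using SV by (intro sum_nonneg cost_ge0) auto
  have "(\<Sum>w\<in>?P - ?T. cost w) / \<alpha> \<le> (2/\<alpha>) * (\<Sum>w\<in>?P - ?T. cost w)"
    using nn a0 by (simp add: field_simps)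
  hence "real (card ?P) \<le> (2/\<alpha>) * ((\<Sum>w\<in>?T. cost w) + (\<Sum>w\<in>?P - ?T. cost w))"
    using c1 c2 c3 by (simp add: distrib_left)
  also have "\<dots> \<le> (2/\<alpha>) * yS S" using c4 a0 by (intro mult_left_mono) auto
  finally show ?thesis .
qed

lemma lemB:
  assumes SV: "S \<subseteq> V" and uS: "u \<in> S" and vS: "v \<in> S"
    and vK: "v = u \<or> v \<in> Tset \<alpha> x S u"
    and piv: "\<forall>u'\<in>S. card (Tset \<gamma> x S u') \<le> card (Tset \<gamma> x S u)"
  shows "real (card {w\<in>S - insert u (Tset \<alpha> x S u). pos v w})
       + real (card {w\<in>insert u (Tset \<alpha> x S u) - {v}. \<not> pos v w}) \<le> (2/\<delta>) * yS S"
proof -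
  let ?T = "Tset \<alpha> x S u"
  let ?K = "insert u ?T"
  let ?N = "{w\<in>?K - {v}. \<not> pos v w}"
  let ?P = "{w\<in>S - ?K. pos v w}"
  have finS: "finite S" using SV fin finite_subset by blast
  have TS: "?T \<subseteq> S" by (auto simp: Tset_def)
  have KS: "?K \<subseteq> S" using TS uS by auto
  have uV: "u \<in> V" using uS SV by auto
  have dp: "0 < \<delta>" by (rule dpos)
  have xuv: "x u v \<le> \<alpha>" using vK by (cases "v = u") (auto simp: Tset_def xrefl[OF uV] a0 less_imp_le)
  have N: "real (card ?N) \<le> yS S / \<delta>"
  proof -
    have "real (card ?N) \<le> (\<Sum>w\<in>?N. cost w) / \<delta>"
    proof (rule card_le_sum)
      show "finite ?N" by (rule finite_subset[of _ S]) (use finS KS in auto)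
      show "?N \<subseteq> V" using KS SV by auto
      show "0 < \<delta>" by (rule dp)
      fix w assume w: "w \<in> ?N"
      hence wV: "w \<in> V" and wv: "w \<noteq> v" using KS SV by auto
      have "x v w \<le> 2*\<alpha>"
      proof (cases "v = u")
        case True thus ?thesis using w a0 by (auto simp: Tset_def)
      next
        case False
        show ?thesis
        proof (cases "w = u")
          case True thus ?thesis using xuv xsym[OF vV uV] a0 by auto
        next
          case False
          hence "x u w \<le> \<alpha>" using w by (auto simp: Tset_def)
          moreover have "x v w \<le> x v u + x u w" using tri[OF vV uV wV] \<open>v \<noteq> u\<close> False wv by auto
          ultimately show ?thesis using xuv xsym[OF vV uV] by auto
        qed
      qed
      thus "\<delta> \<le> cost w" using w da dp by (auto simp: cost_def)
    qed
    also have "\<dots> \<le> yS S / \<delta>" using dp by (intro divide_right_mono sum_sub) (use KS SV in auto)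
    finally show ?thesis .
  qed
  have P: "real (card ?P) \<le> yS S / \<delta>"
  proof (cases "v = u")
    case True
    have "real (card ?P) \<le> (\<Sum>w\<in>?P. cost w) / \<delta>"
    proof (rule card_le_sum)
      show "finite ?P" using finS by auto
      show "?P \<subseteq> V" using SV by auto
      show "0 < \<delta>" by (rule dp)
      fix w assume w: "w \<in> ?P"
      have "\<alpha> < x v w" "pos v w" using w True by (auto simp: Tset_def)
      thus "\<delta> \<le> cost w" using dg ga by (auto simp: cost_def)
    qed
    also have "\<dots> \<le> yS S / \<delta>" using dp by (intro divide_right_mono sum_sub) (use SV True in auto)
    finally show ?thesis .
  next
    case vu: False
    let ?P1 = "{w\<in>?P. \<delta> < x v w}"
    let ?P2 = "{w\<in>?P. x v w \<le> \<delta>}"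
    let ?G = "Tset \<gamma> x S u"
    have GT: "?G \<subseteq> ?T" using ga by (auto simp: Tset_def)
    have finG: "finite ?G" using finS by (auto simp: Tset_def)
    have finP: "finite ?P" using finS by simp
    have e: "?P = ?P1 \<union> ?P2" by auto
    have "card (?P1 \<union> ?P2) = card ?P1 + card ?P2"
      by (rule card_Un_disjoint) (auto intro: finite_subset[OF _ finP])
    hence cP: "card ?P = card ?P1 + card ?P2" by (metis e)
    have c1: "real (card ?P1) \<le> (\<Sum>w\<in>?P1. cost w) / \<delta>"
      by (rule card_le_sum) (use SV dp in \<open>auto simp: cost_def intro: finite_subset[OF _ finP]\<close>)
    have c2: "real (card ?P2) \<le> (\<Sum>w\<in>?G - {v}. cost w) / \<delta>"
    proof (cases "?P2 = {}")
      case True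
      have "0 \<le> (\<Sum>w\<in>?G - {v}. cost w) / \<delta>" using dp SV
        by (intro divide_nonneg_pos sum_nonneg cost_ge0) (auto simp: Tset_def)
      thus ?thesis using True by (metis card.empty of_nat_0)
    next
      case False
      then obtain w0 where w0: "w0 \<in> ?P2" by blast
      hence w0V: "w0 \<in> V" and w0S: "w0 \<in> S" and w0u: "w0 \<noteq> u" and w0v: "w0 \<noteq> v" using SV vK vu by auto
      have "\<not> x u w0 \<le> \<alpha>" using w0 by (auto simp: Tset_def)
      moreover have "x u w0 \<le> x u v + x v w0" using tri[OF uV vV w0V] vu w0u w0v by auto
      ultimately have xuv2: "\<alpha> - \<delta> < x u v" using w0 by auto
      have "?P2 \<subseteq> Tset \<gamma> x S v" using dg vK vu by (auto simp: Tset_def)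
      hence "card ?P2 \<le> card (Tset \<gamma> x S v)" using finS by (intro card_mono) (auto simp: Tset_def)
      also have "\<dots> \<le> card ?G" using piv vS by auto
      also have "card ?G = card (?G - {v})"
      proof -
        have "v \<notin> ?G" using xuv2 dag dp by (auto simp: Tset_def)
        thus ?thesis by simp
      qed
      finally have "real (card ?P2) \<le> real (card (?G - {v}))" by simp
      also have "\<dots> \<le> (\<Sum>w\<in>?G - {v}. cost w) / \<delta>"
      proof (rule card_le_sum)
        show "finite (?G - {v})" using finG by simp
        show "?G - {v} \<subseteq> V" using SV by (auto simp: Tset_def)
        show "0 < \<delta>" by (rule dp)
        fix z assume z: "z \<in> ?G - {v}"
        hence zV: "z \<in> V" and zu: "z \<noteq> u" and xuz: "x u z \<le> \<gamma>" and zv: "z \<noteq> v" using SV by (auto simp: Tset_def)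
        have "x v u \<le> x v z + x z u" using tri[OF vV zV uV] zv zu vu by auto
        hence lo: "\<alpha> - \<delta> - \<gamma> < x v z" using xuv2 xsym[OF vV uV] xsym[OF zV uV] xuz by auto
        have "x v z \<le> x v u + x u z" using tri[OF vV uV zV] zv zu vu by auto
        hence hi: "x v z \<le> \<alpha> + \<gamma>" using xuv xsym[OF vV uV] xuz by auto
        show "\<delta> \<le> cost z" using lo hi dag da ga dp by (auto simp: cost_def)
      qed
      finally show ?thesis .
    qed
    have "(\<Sum>w\<in>?P1. cost w) + (\<Sum>w\<in>?G - {v}. cost w) = (\<Sum>w\<in>?P1 \<union> (?G - {v}). cost w)"
      by (rule sum.union_disjoint[symmetric]) (use finS finG GT in auto)
    also have "\<dots> \<le> yS S" by (rule sum_sub) (use SV vu vK in \<open>auto simp: Tset_def\<close>)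
    finally have "(\<Sum>w\<in>?P1. cost w) + (\<Sum>w\<in>?G - {v}. cost w) \<le> yS S" .
    hence "(\<Sum>w\<in>?P1. cost w) / \<delta> + (\<Sum>w\<in>?G - {v}. cost w) / \<delta> \<le> yS S / \<delta>"
      using dp by (simp add: add_divide_distrib[symmetric] divide_right_mono)
    thus ?thesis using cP c1 c2 by simp
  qed
  have "yS S / \<delta> + yS S / \<delta> = (2/\<delta>) * yS S" by simp
  thus ?thesis using N P by linarith
qed

lemma lemC2:
  assumes SV: "S \<subseteq> V" and uS: "u \<in> S" and vS: "v \<in> S"
    and vK: "v \<notin> insert u (Tset \<alpha> x S u)"
    and piv: "\<forall>u'\<in>S. card (Tset \<gamma> x S u') \<le> card (Tset \<gamma> x S u)"
  shows "real (card {w\<in>insert u (Tset \<alpha> x S u). pos v w}) \<le> (2/\<delta>) * (\<Sum>w\<in>insert u (Tset \<alpha> x S u). cost w)"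
proof -
  let ?T = "Tset \<alpha> x S u"
  let ?K = "insert u ?T"
  let ?P = "{w\<in>?K. pos v w}"
  let ?P1 = "{w\<in>?P. \<delta> < x v w}"
  let ?P2 = "{w\<in>?P. x v w \<le> \<delta>}"
  let ?G = "Tset \<gamma> x S u"
  have finS: "finite S" using SV fin finite_subset by blast
  have TS: "?T \<subseteq> S" by (auto simp: Tset_def)
  have KS: "?K \<subseteq> S" using TS uS by auto
  have finK: "finite ?K" using finite_subset[OF KS finS] .
  have uV: "u \<in> V" using uS SV by auto
  have dp: "0 < \<delta>" by (rule dpos)
  have vu: "v \<noteq> u" using vK by auto
  have xuv: "\<alpha> < x u v" using vK vS by (auto simp: Tset_def)
  have GT: "?G \<subseteq> ?T" using ga by (auto simp: Tset_def)
  have finG: "finite ?G" using finS by (auto simp: Tset_def)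
  have finP: "finite ?P" using finK by simp
  have e: "?P = ?P1 \<union> ?P2" by auto
  have "card (?P1 \<union> ?P2) = card ?P1 + card ?P2"
    by (rule card_Un_disjoint) (auto intro: finite_subset[OF _ finP])
  hence cP: "card ?P = card ?P1 + card ?P2" by (metis e)
  have KV: "?K \<subseteq> V" using KS SV by auto
  have Knn: "\<And>A. A \<subseteq> ?K \<Longrightarrow> (\<Sum>w\<in>A. cost w) \<le> (\<Sum>w\<in>?K. cost w)"
    by (rule sum_mono2[OF finK]) (use KV cost_ge0 in auto)
  have c1: "real (card ?P1) \<le> (\<Sum>w\<in>?P1. cost w) / \<delta>"
    by (rule card_le_sum) (use KV dp in \<open>auto simp: cost_def intro: finite_subset[OF _ finP]\<close>)
  also have "\<dots> \<le> (\<Sum>w\<in>?K. cost w) / \<delta>" using dp by (intro divide_right_mono Knn) auto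
  finally have c1: "real (card ?P1) \<le> (\<Sum>w\<in>?K. cost w) / \<delta>" .
  have c2: "real (card ?P2) \<le> (\<Sum>w\<in>?K. cost w) / \<delta>"
  proof (cases "?P2 = {}")
    case True
    have "0 \<le> (\<Sum>w\<in>?K. cost w) / \<delta>" using dp KV
      by (intro divide_nonneg_pos sum_nonneg cost_ge0) auto
    thus ?thesis using True by (metis card.empty of_nat_0)
  next
    case False
    then obtain w0 where w0: "w0 \<in> ?P2" by blast
    hence w0V: "w0 \<in> V" and w0S: "w0 \<in> S" and w0v: "w0 \<noteq> v" and xw0: "x v w0 \<le> \<delta>"
      using KS SV vK by auto
    have w0u: "w0 \<noteq> u" using xw0 xuv xsym[OF vV uV] dg ga by auto
    have "x u w0 \<le> \<alpha>" using w0 w0u by (auto simp: Tset_def)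
    moreover have "x u v \<le> x u w0 + x w0 v" using tri[OF uV w0V vV] vu w0u w0v by auto
    ultimately have xuv2: "x u v \<le> \<alpha> + \<delta>" using xw0 xsym[OF vV w0V] by auto
    have "?P2 \<subseteq> Tset \<gamma> x S v" using dg vK KS by (auto simp: Tset_def)
    hence "card ?P2 \<le> card (Tset \<gamma> x S v)" using finS by (intro card_mono) (auto simp: Tset_def)
    also have "\<dots> \<le> card ?G" using piv vS by auto
    finally have "real (card ?P2) \<le> real (card ?G)" by simp
    also have "\<dots> \<le> (\<Sum>w\<in>?G. cost w) / \<delta>"
    proof (rule card_le_sum)
      show "finite ?G" by (rule finG)
      show "?G \<subseteq> V" using SV by (auto simp: Tset_def)
      show "0 < \<delta>" by (rule dp)
      fix z assume z: "z \<in> ?G"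
      hence zV: "z \<in> V" and zu: "z \<noteq> u" and xuz: "x u z \<le> \<gamma>" using SV by (auto simp: Tset_def)
      have zv: "z \<noteq> v" using xuz xuv ga by auto
      have "x u v \<le> x u z + x z v" using tri[OF uV zV vV] zv zu vu by auto
      hence lo: "\<alpha> - \<gamma> < x v z" using xuv xsym[OF vV zV] xuz by auto
      have "x v z \<le> x v u + x u z" using tri[OF vV uV zV] zv zu vu by auto
      hence hi: "x v z \<le> \<alpha> + \<delta> + \<gamma>" using xuv2 xsym[OF vV uV] xuz by auto
      show "\<delta> \<le> cost z" using lo hi dag da ga dp by (auto simp: cost_def)
    qed
    also have "\<dots> \<le> (\<Sum>w\<in>?K. cost w) / \<delta>" using dp GT by (intro divide_right_mono Knn) auto
    finally show ?thesis .
  qed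
  have "(\<Sum>w\<in>?K. cost w) / \<delta> + (\<Sum>w\<in>?K. cost w) / \<delta> = (2/\<delta>) * (\<Sum>w\<in>?K. cost w)" by simp
  thus ?thesis using cP c1 c2 by linarith
qed

definition Dset where "Dset S = {z\<in>S-{v}. x v z \<le> \<alpha>/8}"
definition F where "F = {z\<in>V-{v}. \<alpha>/8 \<le> cost z}"
definition M where "M = 4 * card F"
definition pot where "pot S = min (real (card (Dset S))) (real M)"

lemma pot_mono: "S' \<subseteq> S \<Longrightarrow> S \<subseteq> V \<Longrightarrow> pot S' \<le> pot S"
proof -
  assume a: "S' \<subseteq> S" "S \<subseteq> V"
  have "finite S" using a fin finite_subset by blast
  hence "finite (Dset S)" by (simp add: Dset_def)
  moreover have "Dset S' \<subseteq> Dset S" using a by (auto simp: Dset_def)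
  ultimately have "card (Dset S') \<le> card (Dset S)" by (rule card_mono)
  thus ?thesis by (auto simp: pot_def)
qed

lemma pot_ge0: "0 \<le> pot S" by (simp add: pot_def)

lemma lemC1:
  assumes SV: "S \<subseteq> V" and uS: "u \<in> S" and vS: "v \<in> S" and vu: "v \<noteq> u"
    and sing: "(\<Sum>w\<in>Tset \<alpha> x S u. x u w) \<ge> \<alpha> * real (card (Tset \<alpha> x S u)) / 2"
  shows "(if pos v u then 1 else 0) \<le> (8/\<alpha>) * cost u + (pot S - pot (S - {u}))"
proof -
  have uV: "u \<in> V" using uS SV by auto
  have finS: "finite S" using SV fin finite_subset by blast
  have pm: "pot (S - {u}) \<le> pot S" using SV by (intro pot_mono) auto
  have cn: "0 \<le> (8/\<alpha>) * cost u" using cost_ge0[OF uV] a0 by simp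
  show ?thesis
  proof (cases "pos v u \<and> x v u < \<alpha>/8")
    case False
    show ?thesis
    proof (cases "pos v u")
      case True
      hence "\<alpha>/8 \<le> cost u" using False by (auto simp: cost_def)
      hence "1 \<le> (8/\<alpha>) * cost u" using a0 by (simp add: field_simps)
      thus ?thesis using True pm by simp
    next
      case False thus ?thesis using cn pm by simp
    qed
  next
    case True
    hence xvu: "x v u < \<alpha>/8" and pvu: "pos v u" by auto
    let ?T = "Tset \<alpha> x S u"
    let ?H = "{z\<in>?T. \<alpha>/4 < x u z}"
    have finT: "finite ?T" using finS by (simp add: Tset_def)
    have finH: "finite ?H" using finT by simp
    have HT: "?H \<subseteq> ?T" by auto
    have finD: "finite (Dset S)" using finS by (simp add: Dset_def)
    have uD: "u \<in> Dset S" using uS vu xvu by (auto simp: Dset_def)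
    have "Dset (S - {u}) = Dset S - {u}" by (auto simp: Dset_def)
    hence cD: "card (Dset (S - {u})) = card (Dset S) - 1" using uD finD by simp
    have D1: "1 \<le> card (Dset S)" using uD finD by (metis One_nat_def Suc_leI card_gt_0_iff empty_iff)
    have "Dset S - {u} \<subseteq> ?T"
    proof
      fix z assume z: "z \<in> Dset S - {u}"
      hence zV: "z \<in> V" and zS: "z \<in> S" and zv: "z \<noteq> v" and zu: "z \<noteq> u" and xvz: "x v z \<le> \<alpha>/8"
        using SV by (auto simp: Dset_def)
      have "x u z \<le> x u v + x v z" using tri[OF uV vV zV] vu zv zu by auto
      hence "x u z \<le> \<alpha>" using xvu xsym[OF vV uV] xvz a0 by auto
      thus "z \<in> ?T" using zS zu by (auto simp: Tset_def)
    qed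
    hence "card (Dset S - {u}) \<le> card ?T" using finT by (rule card_mono[rotated])
    hence cDT: "card (Dset S) \<le> card ?T + 1" using uD finD by simp
    have sH: "(\<Sum>z\<in>?H. x u z) \<le> real (card ?H) * \<alpha>"
      by (rule sum_bounded_above) (auto simp: Tset_def)
    have sTH: "(\<Sum>z\<in>?T - ?H. x u z) \<le> real (card (?T - ?H)) * (\<alpha>/4)"
      by (rule sum_bounded_above) auto
    have cTH: "real (card (?T - ?H)) = real (card ?T) - real (card ?H)"
      using finH HT by (simp add: card_Diff_subset of_nat_diff card_mono finT)
    have eqs: "(\<Sum>z\<in>?T. x u z) = (\<Sum>z\<in>?H. x u z) + (\<Sum>z\<in>?T - ?H. x u z)"
      using finT HT by (metis (no_types, lifting) add.commute sum.subset_diff)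
    have sTH': "(\<Sum>z\<in>?T - ?H. x u z) \<le> \<alpha>/4 * real (card ?T) - \<alpha>/4 * real (card ?H)"
      using sTH unfolding cTH by (simp add: algebra_simps)
    have sH': "(\<Sum>z\<in>?H. x u z) \<le> \<alpha> * real (card ?H)" using sH by (simp add: mult.commute)
    have "\<alpha> * real (card ?T) / 2 \<le> \<alpha> * real (card ?H) + (\<alpha>/4 * real (card ?T) - \<alpha>/4 * real (card ?H))"
      using sing eqs sH' sTH' by linarith
    hence "\<alpha> * real (card ?T) \<le> \<alpha> * (3 * real (card ?H))" by (simp add: algebra_simps)
    hence cTH3: "real (card ?T) \<le> 3 * real (card ?H)" using a0 by (simp add: mult_le_cancel_left_pos)
    have vT: "v \<in> ?T" using vS vu xvu xsym[OF vV uV] a0 by (auto simp: Tset_def)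
    hence T1: "1 \<le> card ?T" using finT by (metis One_nat_def Suc_leI card_gt_0_iff empty_iff)
    have "card ?H \<noteq> 0"
    proof
      assume "card ?H = 0"
      thus False using cTH3 T1 by simp
    qed
    hence H1: "1 \<le> real (card ?H)" by simp
    have "?H \<subseteq> F"
    proof
      fix z assume z: "z \<in> ?H"
      hence zV: "z \<in> V" and zu: "z \<noteq> u" and xuz: "\<alpha>/4 < x u z" and xuz2: "x u z \<le> \<alpha>"
        using SV by (auto simp: Tset_def)
      have zv: "z \<noteq> v" using xuz xvu xsym[OF vV uV] a0 by auto
      have "x u z \<le> x u v + x v z" using tri[OF uV vV zV] vu zv zu by auto
      hence lo: "\<alpha>/8 < x v z" using xuz xvu xsym[OF vV uV] by auto
      have "x v z \<le> x v u + x u z" using tri[OF vV uV zV] vu zv zu by auto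
      hence hi: "x v z \<le> \<alpha>/8 + \<alpha>" using xuz2 xvu by auto
      have "\<alpha>/8 \<le> cost z" using lo hi ah by (auto simp: cost_def)
      thus "z \<in> F" using zV zv by (auto simp: F_def)
    qed
    hence "card ?H \<le> card F" using fin by (intro card_mono) (auto simp: F_def)
    hence DM: "real (card (Dset S)) \<le> real M" using cDT cTH3 H1 by (simp add: M_def)
    have "pot S = real (card (Dset S))" using DM by (simp add: pot_def)
    moreover have "pot (S - {u}) = real (card (Dset S)) - 1" using cD D1 DM by (simp add: pot_def of_nat_diff)
    ultimately show ?thesis using cn pvu by simp
  qed
qed

definition E where "E S C = (\<Sum>w\<in>S-{v}. if pos v w then clustering_vec C v w else 1 - clustering_vec C v w)"

abbreviation "c1 \<equiv> 2/\<delta> + 8/\<alpha>"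

lemma E_out:
  assumes "finite S" "K \<subseteq> S" "v \<in> S" "v \<notin> K" "\<forall>A\<in>C. A \<subseteq> S - K"
  shows "E S (insert K C) = E (S - K) C + real (card {w\<in>K. pos v w})"
proof -
  have fK: "finite K" using assms(1,2) finite_subset by blast
  have eq: "S - {v} = (S - K - {v}) \<union> K" using assms by auto
  have "E S (insert K C) = (\<Sum>w\<in>S - K - {v}. if pos v w then clustering_vec (insert K C) v w else 1 - clustering_vec (insert K C) v w)
     + (\<Sum>w\<in>K. if pos v w then clustering_vec (insert K C) v w else 1 - clustering_vec (insert K C) v w)"
    unfolding E_def eq by (rule sum.union_disjoint) (use assms fK in auto)
  also have "(\<Sum>w\<in>S - K - {v}. if pos v w then clustering_vec (insert K C) v w else 1 - clustering_vec (insert K C) v w) = E (S - K) C"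
    unfolding E_def by (rule sum.cong) (use assms in \<open>auto simp: clustering_vec_def\<close>)
  also have "(\<Sum>w\<in>K. if pos v w then clustering_vec (insert K C) v w else 1 - clustering_vec (insert K C) v w)
     = (\<Sum>w\<in>K. if pos v w then 1 else 0)"
    by (rule sum.cong) (use assms in \<open>auto simp: clustering_vec_def\<close>)
  also have "\<dots> = real (card {w\<in>K. pos v w})" using fK by (simp add: sum.If_cases Int_def conj_commute)
  finally show ?thesis .
qed

lemma E_in:
  assumes "finite S" "K \<subseteq> S" "v \<in> K" "\<forall>A\<in>C. A \<subseteq> S - K"
  shows "E S (insert K C) = real (card {w\<in>S-K. pos v w}) + real (card {w\<in>K-{v}. \<not> pos v w})"
proof -
  have fK: "finite K" using assms(1,2) finite_subset by blast
  have eq: "S - {v} = (S - K) \<union> (K - {v})" using assms by auto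
  have "E S (insert K C) = (\<Sum>w\<in>S - K. if pos v w then clustering_vec (insert K C) v w else 1 - clustering_vec (insert K C) v w)
     + (\<Sum>w\<in>K - {v}. if pos v w then clustering_vec (insert K C) v w else 1 - clustering_vec (insert K C) v w)"
    unfolding E_def eq by (rule sum.union_disjoint) (use assms fK in auto)
  also have "(\<Sum>w\<in>S - K. if pos v w then clustering_vec (insert K C) v w else 1 - clustering_vec (insert K C) v w) = (\<Sum>w\<in>S - K. if pos v w then 1 else 0)"
    by (rule sum.cong) (use assms in \<open>auto simp: clustering_vec_def\<close>)
  also have "\<dots> = real (card {w\<in>S-K. pos v w})" using assms(1) by (simp add: sum.If_cases Int_def conj_commute)
  also have "(\<Sum>w\<in>K - {v}. if pos v w then clustering_vec (insert K C) v w else 1 - clustering_vec (insert K C) v w)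
     = (\<Sum>w\<in>K - {v}. if pos v w then 0 else 1)"
    by (rule sum.cong) (use assms in \<open>auto simp: clustering_vec_def\<close>)
  also have "\<dots> = real (card {w\<in>K-{v}. \<not> pos v w})" using fK by (simp add: sum.If_cases Int_def conj_commute)
  finally show ?thesis .
qed

lemma yS_split:
  assumes "finite S" "K \<subseteq> S" "v \<notin> K"
  shows "yS S = yS (S - K) + (\<Sum>w\<in>K. cost w)"
proof -
  have fK: "finite K" using assms(1,2) finite_subset by blast
  have eq: "S - {v} = (S - K - {v}) \<union> K" using assms by auto
  show ?thesis unfolding yS_def eq by (rule sum.union_disjoint) (use assms fK in auto)
qed

lemma yS_ge0: "S \<subseteq> V \<Longrightarrow> 0 \<le> yS S"
  unfolding yS_def by (intro sum_nonneg cost_ge0) auto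

lemma c1_ge: "2/\<alpha> \<le> c1" "8/\<alpha> \<le> c1" "2/\<delta> \<le> c1"
  using dpos a0 by (auto simp: field_simps)

lemma main:
  assumes "alg1 \<alpha> \<gamma> x S Cs" "S \<subseteq> V" "v \<in> S"
  shows "E S (set Cs) \<le> c1 * yS S + pot S"
  using assms
proof (induction rule: alg1.induct)
  case stop thus ?case by simp
next
  case (single u S Cs)
  have finS: "finite S" using single.prems fin finite_subset by blast
  have sub: "\<forall>A\<in>set Cs. A \<subseteq> S - {u}" using alg1_sub[OF single.hyps(4)] by blast
  have uV: "u \<in> V" using single.hyps(1) single.prems by auto
  have yn: "0 \<le> yS S" using single.prems by (intro yS_ge0) auto
  show ?case
  proof (cases "v = u")
    case True
    have "E S (set ({u} # Cs)) = real (card {w\<in>S-{u}. pos v w}) + real (card {w\<in>{u}-{v}. \<not> pos v w})"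
      using E_in[of S "{u}" "set Cs"] finS single.hyps(1) True sub by simp
    also have "\<dots> = real (card {w\<in>S-{v}. pos v w})" using True by simp
    also have "\<dots> \<le> (2/\<alpha>) * yS S"
      by (rule lemA) (use single True in auto)
    also have "\<dots> \<le> c1 * yS S" by (rule mult_right_mono[OF c1_ge(1) yn])
    finally show ?thesis using pot_ge0[of S] by simp
  next
    case False
    have "E S (set ({u} # Cs)) = E (S - {u}) (set Cs) + real (card {w\<in>{u}. pos v w})"
      using E_out[of S "{u}" "set Cs"] finS single.hyps(1) single.prems False sub by simp
    also have "real (card {w\<in>{u}. pos v w}) = (if pos v u then 1 else 0)"
    proof (cases "pos v u")
      case True
      hence "{w\<in>{u}. pos v w} = {u}" by auto
      thus ?thesis using True by simp
    next
      case False
      hence "{w\<in>{u}. pos v w} = {}" by auto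
      thus ?thesis using False by simp
    qed
    also have "E (S - {u}) (set Cs) \<le> c1 * yS (S - {u}) + pot (S - {u})"
      using single.IH single.prems False by auto
    also have "(if pos v u then 1 else 0) \<le> (8/\<alpha>) * cost u + (pot S - pot (S - {u}))"
      by (rule lemC1) (use single False in auto)
    also have "(8/\<alpha>) * cost u \<le> c1 * cost u" by (rule mult_right_mono[OF c1_ge(2) cost_ge0[OF uV]])
    also have "yS S = yS (S - {u}) + cost u" using yS_split[of S "{u}"] finS single.hyps(1) False by simp
    ultimately show ?thesis by (simp add: distrib_left)
  qed
next
  case (cluster u S Cs)
  let ?K = "insert u (Tset \<alpha> x S u)"
  have finS: "finite S" using cluster.prems fin finite_subset by blast
  have KS: "?K \<subseteq> S" using cluster.hyps(1) by (auto simp: Tset_def)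
  have sub: "\<forall>A\<in>set Cs. A \<subseteq> S - ?K" using alg1_sub[OF cluster.hyps(4)] by blast
  have KV: "?K \<subseteq> V" using KS cluster.prems by auto
  have yn: "0 \<le> yS S" using cluster.prems by (intro yS_ge0) auto
  show ?case
  proof (cases "v \<in> ?K")
    case True
    have "E S (set (?K # Cs)) = real (card {w\<in>S-?K. pos v w}) + real (card {w\<in>?K-{v}. \<not> pos v w})"
      using E_in[of S ?K "set Cs"] finS KS True sub by simp
    also have "\<dots> \<le> (2/\<delta>) * yS S"
      by (rule lemB) (use cluster True in auto)
    also have "\<dots> \<le> c1 * yS S" by (rule mult_right_mono[OF c1_ge(3) yn])
    finally show ?thesis using pot_ge0[of S] by simp
  next
    case False
    have "E S (set (?K # Cs)) = E (S - ?K) (set Cs) + real (card {w\<in>?K. pos v w})"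
      using E_out[of S ?K "set Cs"] finS KS cluster.prems False sub by simp
    also have "E (S - ?K) (set Cs) \<le> c1 * yS (S - ?K) + pot (S - ?K)"
      using cluster.IH cluster.prems False by auto
    also have "real (card {w\<in>?K. pos v w}) \<le> (2/\<delta>) * (\<Sum>w\<in>?K. cost w)"
      by (rule lemC2) (use cluster False in auto)
    also have "(2/\<delta>) * (\<Sum>w\<in>?K. cost w) \<le> c1 * (\<Sum>w\<in>?K. cost w)"
      by (rule mult_right_mono[OF c1_ge(3)]) (use KV in \<open>auto intro!: sum_nonneg cost_ge0\<close>)
    also have "pot (S - ?K) \<le> pot S" using cluster.prems by (intro pot_mono) auto
    also have "yS S = yS (S - ?K) + (\<Sum>w\<in>?K. cost w)" using yS_split[of S ?K] finS KS False by simp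
    ultimately show ?thesis by (simp add: distrib_left)
  qed
qed

lemma final: "E V C \<le> c1 * yS V + pot V \<Longrightarrow> E V C \<le> (c1 + 32/\<alpha>) * yS V"
proof -
  assume m: "E V C \<le> c1 * yS V + pot V"
  have finF: "finite F" using fin by (simp add: F_def)
  have "real (card F) \<le> (\<Sum>w\<in>F. cost w) / (\<alpha>/8)"
    by (rule card_le_sum) (use finF a0 in \<open>auto simp: F_def\<close>)
  also have "\<dots> \<le> yS V / (\<alpha>/8)" using a0 by (intro divide_right_mono sum_sub) (auto simp: F_def)
  finally have "real (card F) \<le> yS V / (\<alpha>/8)" .
  hence "real M \<le> (32/\<alpha>) * yS V" using a0 by (simp add: M_def field_simps)
  moreover have "pot V \<le> real M" by (simp add: pot_def)
  ultimately show ?thesis using m by (simp add: distrib_right)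
qed

end

theorem theorem1:
  fixes \<alpha> \<gamma> :: real
  assumes "0 < \<gamma>" and "\<gamma> < \<alpha>" and "\<alpha> < 1/2"
  shows "\<exists>c::real. \<forall>(V::'a set) pos x Cs.
           labeled_complete_graph V pos \<and> fractional_clustering V x \<and> alg1 \<alpha> \<gamma> x V Cs \<longrightarrow>
           (\<forall>v\<in>V. err_clustering V pos (set Cs) v \<le> c * err V pos x v)"
proof (intro exI[of _ "(2/dlt \<alpha> \<gamma> + 8/\<alpha>) + 32/\<alpha>"] allI impI ballI)
  fix V :: "'a set" and pos x Cs v
  assume H: "labeled_complete_graph V pos \<and> fractional_clustering V x \<and> alg1 \<alpha> \<gamma> x V Cs" and vV: "v \<in> V"
  interpret cc \<alpha> \<gamma> V pos x v
    using assms H vV by unfold_locales (auto simp: labeled_complete_graph_def)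
  have e1: "err_clustering V pos (set Cs) v = E V (set Cs)"
    unfolding err_clustering_def E_def by (rule err_eq[OF fin])
  have e2: "err V pos x v = yS V"
    unfolding yS_def cost_def by (rule err_eq[OF fin])
  have m: "E V (set Cs) \<le> c1 * yS V + pot V" using main H vV by auto
  show "err_clustering V pos (set Cs) v \<le> (2/dlt \<alpha> \<gamma> + 8/\<alpha> + 32/\<alpha>) * err V pos x v"
    using final[OF m] e1 e2 by simp
qed

end
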